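(* Let $K\subset\mathbb R^d$ be compact, $\varepsilon>0$, $r>0$ and $\mu\in\mathcal F(K)$. There exists $\delta>0$ such that every $\nu\in\mathcal P(K)$ with $L(\mu,\nu)<\delta$ satisfies $I_\nu(r,1)\le\log2+(1-\varepsilon)I_\mu(2r,1)$.
   Context: $\mathcal P(K)$ is the set of Borel probability measures on $K$, $\mathcal F(K)$ the subset of those with finite support. $L$ is the Fortet–Mourier metric $L(\mu,\nu)=\sup_f|\int fd\mu-\int fd\nu|$ over $f:K\to\mathbb R$ with $|f|\le1$ and Lipschitz constant $\le1$. $B(x,r)$ is the open ball and $I_\mu(r,1)=\int_K\log\mu(B(x,r))\,d\mu(x)$. *)

theory Defs
  imports "HOL-Probability.Probability"
begin

definition prob_measures_on :: "'a::euclidean_space set \<Rightarrow> 'a measure set" where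
  "prob_measures_on K = {M. sets M = sets borel \<and> prob_space M \<and> measure M K = 1}"

definition finite_prob_measures_on :: "'a::euclidean_space set \<Rightarrow> 'a measure set" where
  "finite_prob_measures_on K =
     {M \<in> prob_measures_on K. \<exists>S. finite S \<and> S \<subseteq> K \<and> measure M S = 1}"

text \<open>Test functions for the Fortet--Mourier metric: functions on K bounded by 1 with
  Lipschitz constant at most 1 on K (values off K are irrelevant; integrals are taken
  of the function restricted to K).\<close>
definition FM_test :: "'a::euclidean_space set \<Rightarrow> ('a \<Rightarrow> real) set" where
  "FM_test K = {f. (\<forall>x\<in>K. \<bar>f x\<bar> \<le> 1) \<and> 1-lipschitz_on K f}"

definition FM_dist :: "'a::euclidean_space set \<Rightarrow> 'a measure \<Rightarrow> 'a measure \<Rightarrow> real" where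
  "FM_dist K \<mu> \<nu> = (SUP f\<in>FM_test K.
      \<bar>(\<integral>x. f x * indicator K x \<partial>\<mu>) - (\<integral>x. f x * indicator K x \<partial>\<nu>)\<bar>)"

definition I_one :: "'a::euclidean_space measure \<Rightarrow> real \<Rightarrow> real" where
  "I_one \<mu> r = (\<integral>x. ln (measure \<mu> (ball x r)) \<partial>\<mu>)"

end

theory Submission
  imports Defs
begin


lemma meas_ball:
  fixes N :: "'a::euclidean_space measure"
  assumes "sets N = sets borel" "finite_measure N"
  shows "(\<lambda>x. measure N (ball x r)) \<in> borel_measurable borel"
proof -
  interpret finite_measure N by fact
  have o: "open {p::'a\<times>'a. dist (fst p) (snd p) < r}"
    by (auto intro!: open_Collect_less continuous_intros)
  have "sets (borel \<Otimes>\<^sub>M N) = sets (borel \<Otimes>\<^sub>M (borel::'a measure))"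
    by (rule sets_pair_measure_cong) (auto simp: assms)
  also have "\<dots> = sets (borel :: ('a\<times>'a) measure)" by (rule arg_cong[where f=sets, OF borel_prod])
  finally have Q: "{p::'a\<times>'a. dist (fst p) (snd p) < r} \<in> sets (borel \<Otimes>\<^sub>M N)"
    using o by auto
  have eq: "\<And>x. Pair x -` {p::'a\<times>'a. dist (fst p) (snd p) < r} = ball x r"
    by (auto simp: ball_def)
  have "(\<lambda>x. emeasure N (ball x r)) \<in> borel_measurable borel"
    using measurable_emeasure_Pair[OF Q] unfolding eq .
  then show ?thesis unfolding measure_def by measurable
qed



lemma integral_finite_support:
  fixes M :: "'a::euclidean_space measure"
  assumes "prob_space M" "sets M = sets borel" "finite S" "measure M S = 1"
    "F \<in> borel_measurable borel"
  shows "integral\<^sup>L M F = (\<Sum>s\<in>S. measure M {s} * F s)"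
proof -
  interpret prob_space M by fact
  have ae: "AE x in M. x \<in> S" using assms(4) by (intro AE_prob_1) simp
  have m: "F \<in> borel_measurable M" using assms(2,5) measurable_cong_sets by blast
  have "integral\<^sup>L M F = (\<integral>x. F x * indicator S x \<partial>M)"
  proof (rule integral_cong_AE)
    show "F \<in> borel_measurable M" by (fact m)
    have "indicator S \<in> borel_measurable M"
    proof -
      have "S \<in> sets M" using assms(2,3) by (simp add: finite_imp_closed borel_closed)
      then show ?thesis by (rule borel_measurable_indicator)
    qed
    then show "(\<lambda>x. F x * indicator S x) \<in> borel_measurable M" using m by measurable
    show "AE x in M. F x = F x * indicator S x" using ae by eventually_elim simp
  qed
  also have "\<dots> = (\<Sum>a\<in>S. F a * measure M {a})"
    by (rule integral_indicator_finite_real) (auto simp: assms less_top[symmetric])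
  finally show ?thesis by (simp add: mult.commute)
qed

lemma abs_integral_le1:
  fixes M :: "'a measure" and G :: "'a \<Rightarrow> real"
  assumes "prob_space M" "\<And>x. \<bar>G x\<bar> \<le> 1"
  shows "\<bar>integral\<^sup>L M G\<bar> \<le> 1"
proof (cases "integrable M G")
  case True
  interpret prob_space M by fact
  have "\<bar>integral\<^sup>L M G\<bar> \<le> integral\<^sup>L M (\<lambda>x. \<bar>G x\<bar>)"
    by (rule integral_abs_bound)
  also have "\<dots> \<le> integral\<^sup>L M (\<lambda>x. 1)"
    by (rule integral_mono) (use True assms in auto)
  finally show ?thesis by (simp add: prob_space)
next
  case False then show ?thesis by (simp add: not_integrable_integral_eq)
qed

lemma FM_bound:
  fixes K :: "'a::euclidean_space set"
  assumes "compact K" "\<mu> \<in> prob_measures_on K" "\<nu> \<in> prob_measures_on K"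
    "F \<in> FM_test K" "F \<in> borel_measurable borel"
  shows "\<bar>integral\<^sup>L \<mu> F - integral\<^sup>L \<nu> F\<bar> \<le> FM_dist K \<mu> \<nu>"
proof -
  have K: "K \<in> sets borel" using assms(1) by (simp add: compact_imp_closed)
  have eqI: "(\<integral>x. F x * indicator K x \<partial>M) = integral\<^sup>L M F" if "M \<in> prob_measures_on K" for M
  proof -
    have M: "prob_space M" "sets M = sets borel" "measure M K = 1" using that
      by (auto simp: prob_measures_on_def)
    interpret prob_space M by fact
    have ae: "AE x in M. x \<in> K" using M(3) by (intro AE_prob_1) simp
    have m: "F \<in> borel_measurable M" using M(2) assms(5) measurable_cong_sets by blast
    have mK: "indicator K \<in> borel_measurable M" using M(2) K measurable_cong_sets by auto
    show ?thesis
    proof (rule integral_cong_AE)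
      show "(\<lambda>x. F x * indicator K x) \<in> borel_measurable M" using m mK by (rule borel_measurable_times)
      show "F \<in> borel_measurable M" by (fact m)
      show "AE x in M. F x * indicator K x = F x" using ae by eventually_elim simp
    qed
  qed
  have bdd: "bdd_above ((\<lambda>f. \<bar>(\<integral>x. f x * indicator K x \<partial>\<mu>) - (\<integral>x. f x * indicator K x \<partial>\<nu>)\<bar>) ` FM_test K)"
  proof (rule bdd_aboveI2[where M="2::real"])
    fix f assume f: "f \<in> FM_test K"
    have b: "\<bar>f x * indicator K x\<bar> \<le> 1" for x
      using f by (auto simp: FM_test_def indicator_def)
    have "\<bar>(\<integral>x. f x * indicator K x \<partial>\<mu>)\<bar> \<le> 1"
      using assms(2) b by (intro abs_integral_le1) (auto simp: prob_measures_on_def)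
    moreover have "\<bar>(\<integral>x. f x * indicator K x \<partial>\<nu>)\<bar> \<le> 1"
      using assms(3) b by (intro abs_integral_le1) (auto simp: prob_measures_on_def)
    ultimately show "\<bar>(\<integral>x. f x * indicator K x \<partial>\<mu>) - (\<integral>x. f x * indicator K x \<partial>\<nu>)\<bar> \<le> 2"
      by linarith
  qed
  have "\<bar>(\<integral>x. F x * indicator K x \<partial>\<mu>) - (\<integral>x. F x * indicator K x \<partial>\<nu>)\<bar> \<le> FM_dist K \<mu> \<nu>"
    unfolding FM_dist_def by (rule cSUP_upper[OF assms(4) bdd])
  then show ?thesis using eqI assms(2,3) by simp
qed

lemma clip_lip: "\<bar>max 0 (min \<rho> a) - max 0 (min \<rho> b)\<bar> \<le> \<bar>a - b\<bar>" for a b \<rho> :: real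
  unfolding min_def max_def by (smt (verit))

lemma tent_FM:
  fixes K :: "'a::euclidean_space set" and s :: 'a and t :: real
  assumes "0 < \<rho>" "\<rho> \<le> 1"
  defines "F \<equiv> \<lambda>x. max 0 (min \<rho> (t - dist x s))"
  shows "F \<in> FM_test K" "F \<in> borel_measurable borel" "\<And>x. 0 \<le> F x" "\<And>x. F x \<le> \<rho>"
proof -
  have L: "dist (F x) (F y) \<le> dist x y" for x y
  proof -
    have "\<bar>dist x s - dist y s\<bar> \<le> dist x y"
      by (metis abs_dist_diff_le dist_commute)
    then show ?thesis unfolding F_def dist_real_def
      using clip_lip[of \<rho> "t - dist x s" "t - dist y s"] by linarith
  qed
  show "F \<in> FM_test K" unfolding FM_test_def
  proof (intro CollectI conjI ballI lipschitz_onI)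
    fix x show "\<bar>F x\<bar> \<le> 1" using assms(1,2) by (simp add: F_def)
  next
    fix x y show "dist (F x) (F y) \<le> 1 * dist x y" using L by simp
  qed simp
  show "F \<in> borel_measurable borel" unfolding F_def
    by (intro borel_measurable_continuous_onI continuous_intros)
  show "\<And>x. 0 \<le> F x" "\<And>x. F x \<le> \<rho>" using assms by (auto simp: F_def)
qed



lemma ln_ball_props:
  fixes K :: "'a::euclidean_space set"
  assumes "compact K" "\<nu> \<in> prob_measures_on K" "r > 0"
  shows "integrable \<nu> (\<lambda>x. ln (measure \<nu> (ball x r)))"
    and "AE x in \<nu>. 0 < measure \<nu> (ball x r)"
proof -
  have N: "prob_space \<nu>" "sets \<nu> = sets borel" "measure \<nu> K = 1"
    using assms(2) by (auto simp: prob_measures_on_def)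
  interpret prob_space \<nu> by fact
  have balls: "ball c e \<in> sets \<nu>" for c e using N(2) by simp
  obtain C where C: "C \<subseteq> K" "finite C" "K \<subseteq> (\<Union>c\<in>C. ball c (r/2))"
    using compactE_image[OF assms(1), of K "\<lambda>c. ball c (r/2)"] assms(3) by force
  define m where "m c = measure \<nu> (ball c (r/2))" for c
  have aeK: "AE x in \<nu>. x \<in> K" using N(3) by (intro AE_prob_1) simp
  have aeC: "AE x in \<nu>. \<forall>c\<in>C. m c = 0 \<longrightarrow> x \<notin> ball c (r/2)"
  proof (rule AE_finite_allI[OF C(2)])
    fix c assume "c \<in> C"
    show "AE x in \<nu>. m c = 0 \<longrightarrow> x \<notin> ball c (r/2)"
    proof (cases "m c = 0")
      case True
      then have "ball c (r/2) \<in> null_sets \<nu>"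
        using balls by (intro null_setsI) (auto simp: emeasure_eq_measure m_def)
      then have "AE x in \<nu>. x \<notin> ball c (r/2)" by (rule AE_not_in)
      then show ?thesis by eventually_elim simp
    next
      case False then show ?thesis by simp
    qed
  qed
  define B where "B = (\<Sum>c\<in>C. \<bar>ln (m c)\<bar>)"
  have key: "AE x in \<nu>. 0 < measure \<nu> (ball x r) \<and> \<bar>ln (measure \<nu> (ball x r))\<bar> \<le> B"
    using aeK aeC
  proof eventually_elim
    case (elim x)
    then obtain c where c: "c \<in> C" "x \<in> ball c (r/2)" using C(3) by blast
    with elim have mc: "m c > 0" using measure_nonneg[of \<nu>] m_def by (metis less_eq_real_def)
    have sub: "ball c (r/2) \<subseteq> ball x r"
    proof
      fix y assume "y \<in> ball c (r/2)"
      then have "dist c y < r/2" by simp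
      moreover have "dist c x < r/2" using c(2) by simp
      moreover have "dist x y \<le> dist x c + dist c y" by (rule dist_triangle)
      ultimately show "y \<in> ball x r" by (simp add: dist_commute)
    qed
    have le: "m c \<le> measure \<nu> (ball x r)"
      unfolding m_def by (rule finite_measure_mono[OF sub balls])
    have pos: "0 < measure \<nu> (ball x r)" using mc le by linarith
    have "ln (m c) \<le> ln (measure \<nu> (ball x r))" using mc le by simp
    moreover have "ln (measure \<nu> (ball x r)) \<le> 0" using pos prob_le_1 by simp
    moreover have "\<bar>ln (m c)\<bar> \<le> B" unfolding B_def
      by (rule member_le_sum) (use c C(2) in auto)
    ultimately show ?case using pos by linarith
  qed
  have meas: "(\<lambda>x. ln (measure \<nu> (ball x r))) \<in> borel_measurable \<nu>"
  proof -
    have "(\<lambda>x. measure \<nu> (ball x r)) \<in> borel_measurable borel"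
      by (rule meas_ball[OF N(2)]) (rule finite_measure_axioms)
    then have "(\<lambda>x. ln (measure \<nu> (ball x r))) \<in> borel_measurable borel" by measurable
    then show ?thesis using N(2) measurable_cong_sets by blast
  qed
  show "integrable \<nu> (\<lambda>x. ln (measure \<nu> (ball x r)))"
    by (rule integrable_const_bound[where B=B]) (use key meas in auto)
  show "AE x in \<nu>. 0 < measure \<nu> (ball x r)" using key by auto
qed



lemma int_lower:
  fixes M :: "'a::euclidean_space measure"
  assumes "prob_space M" "sets M = sets borel" "A \<in> sets borel" "F \<in> borel_measurable borel"
    "\<And>x. 0 \<le> F x" "\<And>x. F x \<le> \<rho>" "\<And>x. x \<in> A \<Longrightarrow> \<rho> \<le> F x" "0 \<le> \<rho>"
  shows "\<rho> * measure M A \<le> integral\<^sup>L M F"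
proof -
  interpret prob_space M by fact
  have sp: "space M = UNIV" using assms(2) sets_eq_imp_space_eq by fastforce
  have mF: "F \<in> borel_measurable M" using assms(2,4) measurable_cong_sets by blast
  have mA: "indicator A \<in> borel_measurable M" using assms(2,3) by simp
  have iF: "integrable M F"
    by (rule integrable_const_bound[where B=\<rho>]) (use mF assms(5,6) in auto)
  have iA: "integrable M (\<lambda>x. \<rho> * indicator A x)"
  proof (rule integrable_const_bound[where B=\<rho>])
    show "AE x in M. norm (\<rho> * indicator A x) \<le> \<rho>" using assms(8) by (auto simp: indicator_def)
    show "(\<lambda>x. \<rho> * indicator A x) \<in> borel_measurable M"
      by (intro borel_measurable_times borel_measurable_const mA)
  qed
  have "integral\<^sup>L M (\<lambda>x. \<rho> * indicator A x) \<le> integral\<^sup>L M F"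
    by (rule integral_mono[OF iA iF]) (use assms(5,7) in \<open>auto simp: indicator_def\<close>)
  then show ?thesis by (simp add: sp)
qed

lemma int_upper:
  fixes M :: "'a::euclidean_space measure"
  assumes "prob_space M" "sets M = sets borel" "A \<in> sets borel" "F \<in> borel_measurable borel"
    "\<And>x. 0 \<le> F x" "\<And>x. F x \<le> \<rho>" "\<And>x. x \<notin> A \<Longrightarrow> F x = 0" "0 \<le> \<rho>"
  shows "integral\<^sup>L M F \<le> \<rho> * measure M A"
proof -
  interpret prob_space M by fact
  have sp: "space M = UNIV" using assms(2) sets_eq_imp_space_eq by fastforce
  have mF: "F \<in> borel_measurable M" using assms(2,4) measurable_cong_sets by blast
  have mA: "indicator A \<in> borel_measurable M" using assms(2,3) by simp
  have iF: "integrable M F"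
    by (rule integrable_const_bound[where B=\<rho>]) (use mF assms(5,6) in auto)
  have iA: "integrable M (\<lambda>x. \<rho> * indicator A x)"
  proof (rule integrable_const_bound[where B=\<rho>])
    show "AE x in M. norm (\<rho> * indicator A x) \<le> \<rho>" using assms(8) by (auto simp: indicator_def)
    show "(\<lambda>x. \<rho> * indicator A x) \<in> borel_measurable M"
      by (intro borel_measurable_times borel_measurable_const mA)
  qed
  have le: "F x \<le> \<rho> * indicator A x" for x
    using assms(6,7)[of x] by (cases "x \<in> A") auto
  have "integral\<^sup>L M F \<le> integral\<^sup>L M (\<lambda>x. \<rho> * indicator A x)"
    by (rule integral_mono[OF iF iA]) (use le in auto)
  then show ?thesis by (simp add: sp)
qed

lemma ln_32: "ln (3/2::real) + 1/4 \<le> ln 2"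
proof -
  have "ln (3/4::real) \<le> 3/4 - 1" by (rule ln_le_minus_one) simp
  moreover have "ln (3/4::real) = ln (3/2) - ln 2"
    using ln_div[of "3/2::real" 2] by simp
  ultimately show ?thesis by simp
qed



theorem corollary2p4:
  fixes K :: "'a::euclidean_space set" and \<epsilon> r :: real and \<mu> :: "'a measure"
  assumes "compact K" and "\<epsilon> > 0" and "r > 0"
    and "\<mu> \<in> finite_prob_measures_on K"
  shows "\<exists>\<delta>>0. \<forall>\<nu>\<in>prob_measures_on K. FM_dist K \<mu> \<nu> < \<delta> \<longrightarrow>
           I_one \<nu> r \<le> ln 2 + (1 - \<epsilon>) * I_one \<mu> (2 * r)"
proof -
  from assms(4) obtain S where mu: "\<mu> \<in> prob_measures_on K" and S: "finite S" "S \<subseteq> K" "measure \<mu> S = 1"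
    by (auto simp: finite_prob_measures_on_def)
  have Mu: "prob_space \<mu>" "sets \<mu> = sets borel" using mu by (auto simp: prob_measures_on_def)
  interpret Mu: prob_space \<mu> by fact
  have sing: "{x} \<in> sets \<mu>" for x using Mu(2) by (simp add: borel_closed)
  have ballsMu: "ball x e \<in> sets \<mu>" for x e using Mu(2) by simp
  define w where "w s = measure \<mu> {s}" for s
  define T where "T = {s\<in>S. 0 < w s}"
  have T: "finite T" "T \<subseteq> S" using S(1) by (auto simp: T_def)
  have sumS: "(\<Sum>s\<in>S. w s) = 1"
    using S(3) measure_eq_sum_singleton[OF S(1), of \<mu>] sing by (simp add: w_def Mu.emeasure_finite)
  have w0: "0 \<le> w s" for s by (simp add: w_def)
  have sumT: "(\<Sum>s\<in>T. w s) = 1"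
  proof -
    have "(\<Sum>s\<in>T. w s) = (\<Sum>s\<in>S. w s)"
    proof (rule sum.mono_neutral_left[OF S(1) T(2)], intro ballI)
      fix i assume "i \<in> S - T"
      then have "\<not> 0 < w i" by (simp add: T_def)
      then show "w i = 0" using w0[of i] by linarith
    qed
    then show ?thesis using sumS by simp
  qed
  have wpos: "0 < w s" if "s \<in> T" for s using that by (simp add: T_def)
  have Tne: "T \<noteq> {}" using sumT by auto
  have measT: "measure \<mu> T = 1"
    using measure_eq_sum_singleton[OF T(1), of \<mu>] sing sumT by (simp add: w_def Mu.emeasure_finite)
  define q where "q s = measure \<mu> (ball s (2*r))" for s
  have q: "w s \<le> q s" "q s \<le> 1" for s
  proof -
    have "{s} \<subseteq> ball s (2*r)" using assms(3) by simp
    then show "w s \<le> q s" unfolding w_def q_def by (rule Mu.finite_measure_mono) (rule ballsMu)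
    show "q s \<le> 1" unfolding q_def by (rule Mu.prob_le_1)
  qed
  have qpos: "0 < q s" if "s \<in> T" for s using q(1)[of s] wpos[OF that] by linarith
  define L where "L = (\<Sum>s\<in>T. w s * ln (q s))"
  have IL: "I_one \<mu> (2*r) = L"
  proof -
    have "(\<lambda>x. measure \<mu> (ball x (2*r))) \<in> borel_measurable borel"
      by (rule meas_ball[OF Mu(2)]) (rule Mu.finite_measure_axioms)
    then have m: "(\<lambda>x. ln (measure \<mu> (ball x (2*r)))) \<in> borel_measurable borel" by measurable
    show ?thesis unfolding I_one_def L_def w_def q_def
      by (rule integral_finite_support[OF Mu T(1) measT m])
  qed
  have lnq: "ln (q s) \<le> 0" if "s \<in> T" for s using qpos[OF that] q(2)[of s] by simp
  have L0: "L \<le> 0" unfolding L_def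
    by (rule sum_nonpos) (use w0 lnq in \<open>auto intro: mult_nonneg_nonpos\<close>)
  define M' where "M' = (\<Sum>s\<in>T. - ln (q s))"
  have M'0: "0 \<le> M'" unfolding M'_def by (rule sum_nonneg) (use lnq in auto)
  define p where "p = Min (w ` T)"
  have p: "0 < p" "\<And>s. s \<in> T \<Longrightarrow> p \<le> w s"
    using T(1) Tne wpos by (auto simp: p_def)
  define \<eta> where "\<eta> = min (p/2) (1/(4*(M'+1)))"
  have \<eta>: "0 < \<eta>" "\<eta> \<le> p/2" using p M'0 by (auto simp: \<eta>_def)
  have \<eta>M: "\<eta> * M' \<le> 1/4"
  proof -
    have "\<eta> * M' \<le> (1/(4*(M'+1))) * M'"
      by (rule mult_right_mono) (use M'0 in \<open>auto simp: \<eta>_def\<close>)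
    also have "\<dots> \<le> 1/4" using M'0 by (simp add: field_simps)
    finally show ?thesis .
  qed
  define D where "D = (\<lambda>(s,t). dist s t) ` {(s,t). s \<in> T \<and> t \<in> T \<and> s \<noteq> t}"
  have fD: "finite D" unfolding D_def
    by (rule finite_imageI, rule finite_subset[of _ "T \<times> T"]) (use T(1) in auto)
  define sep where "sep = Min (insert 1 D)"
  have sep: "0 < sep" using fD by (auto simp: sep_def D_def)
  have sep2: "sep \<le> dist s t" if "s \<in> T" "t \<in> T" "s \<noteq> t" for s t
  proof -
    have "dist s t \<in> D" using that unfolding D_def by force
    then show ?thesis unfolding sep_def using fD by simp
  qed
  define \<rho> where "\<rho> = min (min 1 (r/2)) (sep/2)"
  have \<rho>: "0 < \<rho>" "\<rho> \<le> 1" "\<rho> \<le> r/2" "\<rho> \<le> sep/2" using sep assms(3) by (auto simp: \<rho>_def)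
  have disj: "s = t" if "s \<in> T" "t \<in> T" "x \<in> ball s \<rho>" "x \<in> ball t \<rho>" for s t x
  proof (rule ccontr)
    assume "s \<noteq> t"
    then have "sep \<le> dist s t" using sep2 that(1,2) by blast
    moreover have "dist s t \<le> dist s x + dist x t" by (rule dist_triangle)
    moreover have "dist s x < \<rho>" "dist x t < \<rho>" using that(3,4) by (auto simp: dist_commute)
    ultimately show False using \<rho>(4) by linarith
  qed
  show ?thesis
  proof (intro exI[of _ "\<eta>*\<rho>"] conjI ballI impI)
    show "0 < \<eta>*\<rho>" using \<eta>(1) \<rho>(1) by simp
    fix \<nu> assume nu: "\<nu> \<in> prob_measures_on K" and close: "FM_dist K \<mu> \<nu> < \<eta>*\<rho>"
    have Nu: "prob_space \<nu>" "sets \<nu> = sets borel" using nu by (auto simp: prob_measures_on_def)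
    interpret Nu: prob_space \<nu> by fact
    have ballsNu: "ball x e \<in> sets \<nu>" for x e using Nu(2) by simp
    have A: "w s - \<eta> \<le> measure \<nu> (ball s \<rho>)" if s: "s \<in> T" for s
    proof -
      define F where "F = (\<lambda>x::'a. max 0 (min \<rho> (\<rho> - dist x s)))"
      have FF: "F \<in> FM_test K" "F \<in> borel_measurable borel" "\<And>x. 0 \<le> F x" "\<And>x. F x \<le> \<rho>"
        using tent_FM(1)[where K=K and t=\<rho> and s=s, OF \<rho>(1,2)] tent_FM(2-4)[where t=\<rho> and s=s, OF \<rho>(1,2)] unfolding F_def by auto
      have l: "\<rho> * measure \<mu> {s} \<le> integral\<^sup>L \<mu> F"
        by (rule int_lower[OF Mu _ FF(2,3,4)]) (use \<rho>(1) in \<open>auto simp: F_def borel_closed\<close>)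
      have u: "integral\<^sup>L \<nu> F \<le> \<rho> * measure \<nu> (ball s \<rho>)"
        by (rule int_upper[OF Nu _ FF(2,3,4)]) (use \<rho>(1) in \<open>auto simp: F_def dist_commute\<close>)
      have "\<bar>integral\<^sup>L \<mu> F - integral\<^sup>L \<nu> F\<bar> \<le> FM_dist K \<mu> \<nu>"
        by (rule FM_bound[OF assms(1) mu nu FF(1,2)])
      then have "\<rho> * (w s - measure \<nu> (ball s \<rho>)) < \<rho> * \<eta>"
        using l u close unfolding w_def by (simp add: algebra_simps)
      then show ?thesis using \<rho>(1) by simp
    qed
    have B: "measure \<nu> (ball s (r+\<rho>)) \<le> q s + \<eta>" if s: "s \<in> T" for s
    proof -
      define F where "F = (\<lambda>x::'a. max 0 (min \<rho> ((r + 2*\<rho>) - dist x s)))"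
      have FF: "F \<in> FM_test K" "F \<in> borel_measurable borel" "\<And>x. 0 \<le> F x" "\<And>x. F x \<le> \<rho>"
        using tent_FM(1)[where K=K and t="r + 2*\<rho>" and s=s, OF \<rho>(1,2)] tent_FM(2-4)[where t="r + 2*\<rho>" and s=s, OF \<rho>(1,2)] unfolding F_def by auto
      have l: "\<rho> * measure \<nu> (ball s (r+\<rho>)) \<le> integral\<^sup>L \<nu> F"
        by (rule int_lower[OF Nu _ FF(2,3,4)]) (use \<rho>(1) in \<open>auto simp: F_def dist_commute\<close>)
      have u: "integral\<^sup>L \<mu> F \<le> \<rho> * measure \<mu> (ball s (2*r))"
        by (rule int_upper[OF Mu _ FF(2,3,4)]) (use \<rho>(1,3) in \<open>auto simp: F_def dist_commute\<close>)
      have "\<bar>integral\<^sup>L \<mu> F - integral\<^sup>L \<nu> F\<bar> \<le> FM_dist K \<mu> \<nu>"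
        by (rule FM_bound[OF assms(1) mu nu FF(1,2)])
      then have "\<rho> * (measure \<nu> (ball s (r+\<rho>)) - q s) < \<rho> * \<eta>"
        using l u close unfolding q_def by (simp add: algebra_simps)
      then show ?thesis using \<rho>(1) by simp
    qed
    note props = ln_ball_props[OF assms(1) nu assms(3)]
    define c where "c s = min 0 (ln (q s + \<eta>))" for s
    define g where "g x = (\<Sum>s\<in>T. c s * indicator (ball s \<rho>) x)" for x
    have ae: "AE x in \<nu>. ln (measure \<nu> (ball x r)) \<le> g x"
      using props(2)
    proof eventually_elim
      case (elim x)
      have le0: "ln (measure \<nu> (ball x r)) \<le> 0" using elim Nu.prob_le_1 by simp
      show ?case
      proof (cases "\<exists>s\<in>T. x \<in> ball s \<rho>")
        case True
        then obtain s where s: "s \<in> T" "x \<in> ball s \<rho>" by blast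
        have "g x = (\<Sum>t\<in>T. if t = s then c s else 0)" unfolding g_def
          by (rule sum.cong) (use disj s in \<open>auto simp: indicator_def\<close>)
        also have "\<dots> = c s" using s(1) T(1) by simp
        finally have gx: "g x = c s" .
        have sub: "ball x r \<subseteq> ball s (r+\<rho>)"
        proof
          fix y assume "y \<in> ball x r"
          then have "dist x y < r" by simp
          moreover have "dist s x < \<rho>" using s(2) by simp
          moreover have "dist s y \<le> dist s x + dist x y" by (rule dist_triangle)
          ultimately show "y \<in> ball s (r+\<rho>)" by simp
        qed
        have "measure \<nu> (ball x r) \<le> measure \<nu> (ball s (r+\<rho>))"
          by (rule Nu.finite_measure_mono[OF sub ballsNu])
        then have "measure \<nu> (ball x r) \<le> q s + \<eta>" using B[OF s(1)] by linarith
        then have "ln (measure \<nu> (ball x r)) \<le> ln (q s + \<eta>)" using elim by simp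
        then show ?thesis using le0 gx by (simp add: c_def)
      next
        case False
        then have "g x = 0" unfolding g_def by (auto intro!: sum.neutral)
        then show ?thesis using le0 by simp
      qed
    qed
    have sp: "space \<nu> = UNIV" using Nu(2) sets_eq_imp_space_eq by fastforce
    have ii: "integrable \<nu> (\<lambda>x. c s * indicator (ball s \<rho>) x)" for s
      by (rule integrable_mult_right, rule integrable_real_indicator) (auto simp: ballsNu less_top[symmetric])
    have ig: "integrable \<nu> g" unfolding g_def using ii by simp
    have intg: "integral\<^sup>L \<nu> g = (\<Sum>s\<in>T. c s * measure \<nu> (ball s \<rho>))"
      unfolding g_def using ii sp by simp
    have step1: "I_one \<nu> r \<le> (\<Sum>s\<in>T. c s * measure \<nu> (ball s \<rho>))"
      unfolding I_one_def using integral_mono_AE[OF props(1) ig ae] intg by simp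
    have c0: "c s \<le> 0" for s by (simp add: c_def)
    have step2: "(\<Sum>s\<in>T. c s * measure \<nu> (ball s \<rho>)) \<le> (\<Sum>s\<in>T. c s * (w s - \<eta>))"
      by (rule sum_mono) (use A c0 in \<open>auto intro: mult_left_mono_neg\<close>)
    have c32: "c s \<le> ln (3/2) + ln (q s)" if s: "s \<in> T" for s
    proof -
      have "\<eta> \<le> q s / 2" using \<eta>(2) p(2)[OF s] q(1)[of s] by linarith
      then have "q s + \<eta> \<le> (3/2) * q s" by simp
      then have "ln (q s + \<eta>) \<le> ln ((3/2) * q s)" using qpos[OF s] \<eta>(1) by simp
      also have "\<dots> = ln (3/2) + ln (q s)" by (rule ln_mult_pos) (use qpos[OF s] in auto)
      finally show ?thesis by (simp add: c_def)
    qed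
    have weta: "0 \<le> w s - \<eta>" if s: "s \<in> T" for s using \<eta>(2) p(2)[OF s] p(1) by linarith
    have step3: "(\<Sum>s\<in>T. c s * (w s - \<eta>)) \<le> (\<Sum>s\<in>T. (w s - \<eta>) * (ln (3/2) + ln (q s)))"
    proof (rule sum_mono)
      fix s assume s: "s \<in> T"
      have "c s * (w s - \<eta>) \<le> (ln (3/2) + ln (q s)) * (w s - \<eta>)"
        by (rule mult_right_mono[OF c32[OF s] weta[OF s]])
      then show "c s * (w s - \<eta>) \<le> (w s - \<eta>) * (ln (3/2) + ln (q s))" by (simp add: mult.commute)
    qed
    have step4: "(\<Sum>s\<in>T. (w s - \<eta>) * (ln (3/2) + ln (q s)))
        = ln (3/2) * (1 - \<eta> * card T) + L + \<eta> * M'"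
    proof -
      have "(\<Sum>s\<in>T. (w s - \<eta>) * (ln (3/2) + ln (q s)))
          = ln (3/2) * (\<Sum>s\<in>T. w s) - ln (3/2) * \<eta> * card T + (\<Sum>s\<in>T. w s * ln (q s)) + \<eta> * (\<Sum>s\<in>T. - ln (q s))"
      proof -
        define l :: real where "l = ln (3/2)"
        have "(\<Sum>s\<in>T. (w s - \<eta>) * (l + ln (q s)))
           = (\<Sum>s\<in>T. l * w s - l * \<eta> + w s * ln (q s) + \<eta> * (- ln (q s)))"
          by (rule sum.cong) (simp_all add: algebra_simps)
        also have "\<dots> = l * (\<Sum>s\<in>T. w s) - l * \<eta> * card T + (\<Sum>s\<in>T. w s * ln (q s)) + \<eta> * (\<Sum>s\<in>T. - ln (q s))"
          by (simp only: sum.distrib sum_subtractf sum_distrib_left[symmetric] sum_constant) (simp add: algebra_simps)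
        finally show ?thesis unfolding l_def .
      qed
      then show ?thesis using sumT by (simp add: L_def M'_def algebra_simps)
    qed
    have l32: "0 \<le> ln (3/2::real)" by simp
    have "ln (3/2) * (1 - \<eta> * card T) \<le> ln (3/2)"
      using l32 \<eta>(1) by (simp add: algebra_simps)
    then have "I_one \<nu> r \<le> ln (3/2) + L + 1/4"
      using step1 step2 step3 step4 \<eta>M by linarith
    also have "\<dots> \<le> ln 2 + L" using ln_32 by linarith
    also have "\<dots> \<le> ln 2 + (1 - \<epsilon>) * L"
      using L0 assms(2) by (simp add: algebra_simps mult_nonpos_nonneg)
    finally show "I_one \<nu> r \<le> ln 2 + (1 - \<epsilon>) * I_one \<mu> (2 * r)" using IL by simp
  qed
qed


end
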